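(* Let $0<\tau<T$, $\lambda>0$, $\kappa_3\in(0,1)$ and $t_3\in(\tau,T)$. For every $\gamma_3\ge\kappa_3/(t_3-\tau)$, any solution $(x(t),y(t))$ on $[\tau,T]$ of \[ x'=y,\qquad y'=-\lambda a^+(t)g(x) \] with $x(t_3)\le\kappa_3$ and $y(t_3)\ge\gamma_3$ satisfies $x(\tau)\le0$ and $y(\tau)\ge\gamma_3$.
   Context: $a\in L^1(\tau,T)$ with positive part $a^+$. $g\colon\mathbb{R}\to[0,+\infty)$ is the extension by zero outside $[0,1]$ of a locally Lipschitz continuous function $g\colon[0,1]\to[0,+\infty)$ with $g(0)=g(1)=0$, $g(s)>0$ for $0<s<1$ and $\lim_{s\to0^+}g(s)/s=0$. Solutions are in the Carathéodory sense. *)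

theory Defs
  imports "HOL-Analysis.Analysis"
begin

definition pos_part_fun :: "(real \<Rightarrow> real) \<Rightarrow> real \<Rightarrow> real" where
  "pos_part_fun a t = max (a t) 0"

definition admissible_g :: "(real \<Rightarrow> real) \<Rightarrow> bool" where
  "admissible_g g \<longleftrightarrow>
     (\<forall>s. s < 0 \<or> s > 1 \<longrightarrow> g s = 0) \<and>
     (\<forall>s. g s \<ge> 0) \<and>
     (\<forall>s\<in>{0..1}. \<exists>e>0. \<exists>L. L-lipschitz_on (cball s e \<inter> {0..1}) g) \<and>
     g 0 = 0 \<and> g 1 = 0 \<and>
     (\<forall>s. 0 < s \<and> s < 1 \<longrightarrow> g s > 0) \<and>
     ((\<lambda>s. g s / s) \<longlongrightarrow> 0) (at_right 0)"

text \<open>Caratheodory solution on [tau,T] of x' = y, y' = - lambda a^+(t) g(x),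
  expressed in the equivalent integral form (absolutely continuous functions whose
  a.e. derivatives are the right-hand sides).\<close>
definition carath_solution ::
  "real \<Rightarrow> real \<Rightarrow> real \<Rightarrow> (real \<Rightarrow> real) \<Rightarrow> (real \<Rightarrow> real) \<Rightarrow> (real \<Rightarrow> real) \<Rightarrow> (real \<Rightarrow> real) \<Rightarrow> bool" where
  "carath_solution \<tau> T lam a g x y \<longleftrightarrow>
     continuous_on {\<tau>..T} x \<and> continuous_on {\<tau>..T} y \<and>
     (\<lambda>s. pos_part_fun a s * g (x s)) absolutely_integrable_on {\<tau>..T} \<and>
     (\<forall>t\<in>{\<tau>..T}. x t = x \<tau> + integral {\<tau>..t} y) \<and>
     (\<forall>t\<in>{\<tau>..T}. y t = y \<tau> - lam * integral {\<tau>..t} (\<lambda>s. pos_part_fun a s * g (x s)))"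

end

theory Submission
  imports Defs
begin

theorem lemma2p4:
  fixes \<tau> T lam \<kappa>\<^sub>3 t\<^sub>3 \<gamma>\<^sub>3 :: real and a g x y :: "real \<Rightarrow> real"
  assumes "0 < \<tau>" "\<tau> < T" "lam > 0"
    and "0 < \<kappa>\<^sub>3" "\<kappa>\<^sub>3 < 1"
    and "\<tau> < t\<^sub>3" "t\<^sub>3 < T"
    and "a absolutely_integrable_on {\<tau>..T}"
    and "admissible_g g"
    and "\<gamma>\<^sub>3 \<ge> \<kappa>\<^sub>3 / (t\<^sub>3 - \<tau>)"
    and "carath_solution \<tau> T lam a g x y"
    and "x t\<^sub>3 \<le> \<kappa>\<^sub>3" "y t\<^sub>3 \<ge> \<gamma>\<^sub>3"
  shows "x \<tau> \<le> 0 \<and> y \<tau> \<ge> \<gamma>\<^sub>3"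
proof -
  define f where "f = (\<lambda>s. pos_part_fun a s * g (x s))"
  have sol: "continuous_on {\<tau>..T} y" "f absolutely_integrable_on {\<tau>..T}"
    "\<forall>t\<in>{\<tau>..T}. x t = x \<tau> + integral {\<tau>..t} y"
    "\<forall>t\<in>{\<tau>..T}. y t = y \<tau> - lam * integral {\<tau>..t} f"
    using assms(11) unfolding carath_solution_def f_def by blast+
  have gnn: "\<And>s. g s \<ge> 0" using assms(9) unfolding admissible_g_def by auto
  have fnn: "\<And>s. f s \<ge> 0" unfolding f_def pos_part_fun_def using gnn by simp
  have fint: "f integrable_on {\<tau>..T}" using sol(2) set_lebesgue_integral_eq_integral(1) by blast
  have ymono: "y t \<ge> y t\<^sub>3" if "t \<in> {\<tau>..t\<^sub>3}" for t
  proof -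
    have i1: "f integrable_on {\<tau>..t}" using that assms(7) by (intro integrable_on_subinterval[OF fint]) auto
    have i2: "f integrable_on {\<tau>..t\<^sub>3}" using that assms(7) by (intro integrable_on_subinterval[OF fint]) auto
    have "integral {\<tau>..t} f \<le> integral {\<tau>..t\<^sub>3} f"
      using that by (intro integral_subset_le[OF _ i1 i2]) (auto simp: fnn)
    then have "lam * integral {\<tau>..t} f \<le> lam * integral {\<tau>..t\<^sub>3} f"
      using assms(3) by (simp add: mult_left_mono)
    moreover have "y t = y \<tau> - lam * integral {\<tau>..t} f" using bspec[OF sol(4), of t] that assms(7) by simp
    moreover have "y t\<^sub>3 = y \<tau> - lam * integral {\<tau>..t\<^sub>3} f" using bspec[OF sol(4), of t\<^sub>3] assms(6,7) by simp
    ultimately show ?thesis by linarith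
  qed
  have y1: "y \<tau> \<ge> \<gamma>\<^sub>3" using ymono[of \<tau>] assms(6,13) by auto
  have yint: "y integrable_on {\<tau>..t\<^sub>3}"
    by (rule integrable_continuous_interval, rule continuous_on_subset[OF sol(1)]) (use assms(7) in auto)
  have "integral {\<tau>..t\<^sub>3} (\<lambda>_. \<gamma>\<^sub>3) \<le> integral {\<tau>..t\<^sub>3} y"
    using ymono assms(13) by (intro integral_le[OF _ yint]) (auto intro: order_trans)
  then have "\<gamma>\<^sub>3 * (t\<^sub>3 - \<tau>) \<le> integral {\<tau>..t\<^sub>3} y" using assms(6) by (simp add: mult.commute)
  moreover have "\<kappa>\<^sub>3 \<le> \<gamma>\<^sub>3 * (t\<^sub>3 - \<tau>)" using assms(6,10) by (simp add: pos_divide_le_eq)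
  moreover have "x t\<^sub>3 = x \<tau> + integral {\<tau>..t\<^sub>3} y" using bspec[OF sol(3), of t\<^sub>3] assms(6,7) by simp
  ultimately have "x \<tau> \<le> 0" using assms(12) by linarith
  with y1 show ?thesis by simp
qed

end
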